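(* For every $n\ge3$ there exists an instance of the general public project problem with $n$ players (i.e., a choice of $c>0$ and cost shares $c_1,\dots,c_n>0$ with $\sum_ic_i=c$) for which the BC mechanism dominates the VCG mechanism.
   Context: General public project problem: $n$ players, decisions $D=\{0,1\}$, $\Theta_i=[0,c]$ with $c>0$, $v_i(d,\theta_i)=d(\theta_i-c_i)$ where $c_i>0$ and $\sum_ic_i=c$; efficient decision $f(\theta)=1$ iff $\sum_i\theta_i\ge c$. Player $i$'s utility is $v_i(f(\theta),\theta_i)+t_i(\theta)$. The VCG (Clarke) mechanism: $t_i^{VCG}(\theta)=\sum_{j\ne i}v_j(f(\theta),\theta_j)-\max_{d\in D}\sum_{j\ne i}v_j(d,\theta_j)$. The BC (Bailey–Cavallo) mechanism: $t_i^{BC}(\theta)=t_i^{VCG}(\theta)-S_i(\theta_{-i})/n$ where $S_i(\theta_{-i})=\max_{\theta_i'\in[0,c]}\sum_{k=1}^n t_k^{VCG}(\theta_i',\theta_{-i})$. $t'$ dominates $t$ if $t_i(\theta)\le t'_i(\theta)$ for all $\theta,i$, strictly for some $\theta,i$. *)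

theory Defs
  imports Complex_Main
begin

text \<open>Players are 0,...,n-1; a type profile is theta :: nat => real (only entries < n matter).
  The decision d :: bool (True = build the project, i.e. d = 1).\<close>

definition valuation :: "real \<Rightarrow> bool \<Rightarrow> real \<Rightarrow> real" where
  "valuation ci d x = (if d then x - ci else 0)"

definition efficient :: "nat \<Rightarrow> real \<Rightarrow> (nat \<Rightarrow> real) \<Rightarrow> bool" where
  "efficient n c \<theta> = ((\<Sum>i<n. \<theta> i) \<ge> c)"

definition types :: "nat \<Rightarrow> real \<Rightarrow> (nat \<Rightarrow> real) set" where
  "types n c = {\<theta>. \<forall>i<n. \<theta> i \<in> {0..c}}"

definition others_val :: "nat \<Rightarrow> (nat \<Rightarrow> real) \<Rightarrow> bool \<Rightarrow> (nat \<Rightarrow> real) \<Rightarrow> nat \<Rightarrow> real" where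
  "others_val n cs d \<theta> i = (\<Sum>j\<in>{..<n} - {i}. valuation (cs j) d (\<theta> j))"

definition t_VCG :: "nat \<Rightarrow> real \<Rightarrow> (nat \<Rightarrow> real) \<Rightarrow> (nat \<Rightarrow> real) \<Rightarrow> nat \<Rightarrow> real" where
  "t_VCG n c cs \<theta> i =
     others_val n cs (efficient n c \<theta>) \<theta> i
     - Max ((\<lambda>d. others_val n cs d \<theta> i) ` UNIV)"

definition S_BC :: "nat \<Rightarrow> real \<Rightarrow> (nat \<Rightarrow> real) \<Rightarrow> (nat \<Rightarrow> real) \<Rightarrow> nat \<Rightarrow> real" where
  "S_BC n c cs \<theta> i = (SUP x\<in>{0..c}. \<Sum>k<n. t_VCG n c cs (\<theta>(i := x)) k)"

definition t_BC :: "nat \<Rightarrow> real \<Rightarrow> (nat \<Rightarrow> real) \<Rightarrow> (nat \<Rightarrow> real) \<Rightarrow> nat \<Rightarrow> real" where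
  "t_BC n c cs \<theta> i = t_VCG n c cs \<theta> i - S_BC n c cs \<theta> i / real n"

definition dominates :: "nat \<Rightarrow> real \<Rightarrow> ((nat \<Rightarrow> real) \<Rightarrow> nat \<Rightarrow> real)
    \<Rightarrow> ((nat \<Rightarrow> real) \<Rightarrow> nat \<Rightarrow> real) \<Rightarrow> bool" where
  "dominates n c t' t \<longleftrightarrow>
     (\<forall>\<theta>\<in>types n c. \<forall>i<n. t \<theta> i \<le> t' \<theta> i) \<and>
     (\<exists>\<theta>\<in>types n c. \<exists>i<n. t \<theta> i < t' \<theta> i)"

end

theory Submission
  imports Defs
begin

lemma tVCG_eq:
  "t_VCG n c cs \<theta> i = (if efficient n c \<theta> then min (others_val n cs True \<theta> i) 0
                        else - max (others_val n cs True \<theta> i) 0)"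
proof -
  have U: "(UNIV::bool set) = {True, False}" by auto
  have F: "others_val n cs False \<theta> i = 0" by (simp add: others_val_def valuation_def)
  show ?thesis unfolding t_VCG_def U using F by (auto simp: max_def min_def)
qed

lemma tVCG_nonpos: "t_VCG n c cs \<theta> i \<le> 0"
  by (simp add: tVCG_eq)

lemma ov_True:
  assumes "i < n"
  shows "others_val n cs True \<theta> i = (\<Sum>j<n. \<theta> j - cs j) - (\<theta> i - cs i)"
proof -
  have "(\<Sum>j<n. \<theta> j - cs j) = (\<theta> i - cs i) + (\<Sum>j\<in>{..<n} - {i}. \<theta> j - cs j)"
    using assms by (subst sum.remove[of _ i]) auto
  thus ?thesis by (simp add: others_val_def valuation_def)
qed

lemma S_nonpos: "c \<ge> 0 \<Longrightarrow> S_BC n c cs \<theta> i \<le> 0"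
  unfolding S_BC_def
  by (rule cSUP_least) (auto intro: sum_nonpos tVCG_nonpos)

theorem theorem5:
  fixes n :: nat
  assumes "n \<ge> 3"
  shows "\<exists>c::real. \<exists>cs :: nat \<Rightarrow> real. c > 0 \<and> (\<forall>i<n. cs i > 0) \<and> (\<Sum>i<n. cs i) = c \<and>
           dominates n c (t_BC n c cs) (t_VCG n c cs)"
proof -
  define cs :: "nat \<Rightarrow> real" where "cs = (\<lambda>j. if j = 1 then 3 else 1)"
  define c :: real where "c = real n + 2"
  define \<theta> :: "nat \<Rightarrow> real" where "\<theta> = (\<lambda>j. if j = 1 then 0 else if j = 2 then 3 else 1)"
  have split: "{..<n} = {0,1,2} \<union> {3..<n}" using assms by auto
  have sumgen: "(\<Sum>j<n. f j) = f 0 + f 1 + f 2 + (\<Sum>j\<in>{3..<n}. f j)" for f :: "nat \<Rightarrow> real"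
    unfolding split by (subst sum.union_disjoint) auto
  have csum: "(\<Sum>i<n. cs i) = c"
  proof -
    have "(\<Sum>j\<in>{3..<n}. cs j) = real n - 3" using assms by (simp add: cs_def)
    thus ?thesis by (simp add: sumgen cs_def c_def)
  qed
  have key: "(\<Sum>k<n. t_VCG n c cs (\<theta>(0 := x)) k) \<le> -1" if x: "x \<in> {0..c}" for x
  proof -
    let ?t = "\<theta>(0 := x)"
    have tot: "(\<Sum>j<n. ?t j - cs j) = x - 2"
    proof -
      have "(\<Sum>j\<in>{3..<n}. ?t j - cs j) = 0" by (simp add: cs_def \<theta>_def)
      thus ?thesis by (simp add: sumgen cs_def \<theta>_def)
    qed
    have eff: "efficient n c ?t \<longleftrightarrow> x \<ge> 2"
    proof -
      have "(\<Sum>j\<in>{3..<n}. ?t j) = real n - 3" using assms by (simp add: \<theta>_def)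
      hence "(\<Sum>j<n. ?t j) = x + real n" by (simp add: sumgen \<theta>_def)
      thus ?thesis by (simp add: efficient_def c_def)
    qed
    have ov0: "others_val n cs True ?t 0 = -1" using assms by (simp only: ov_True tot) (simp add: cs_def)
    have ov1: "others_val n cs True ?t 1 = x + 1" using assms by (simp only: ov_True tot) (simp add: cs_def \<theta>_def)
    have "(\<Sum>k<n. t_VCG n c cs ?t k) = t_VCG n c cs ?t 0 + t_VCG n c cs ?t 1
           + (\<Sum>k\<in>{2}\<union>{3..<n}. t_VCG n c cs ?t k)"
      by (simp add: sumgen)
    also have "\<dots> \<le> t_VCG n c cs ?t 0 + t_VCG n c cs ?t 1"
      using tVCG_nonpos[of n c cs ?t 2] sum_nonpos[of "{3..<n}" "t_VCG n c cs ?t"] tVCG_nonpos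
      by (simp add: add_nonpos_nonpos)
    also have "\<dots> \<le> -1"
      using x tVCG_nonpos[of n c cs ?t 0] tVCG_nonpos[of n c cs ?t 1]
      using ov1 by (cases "x \<ge> 2") (simp_all add: tVCG_eq eff ov0)
    finally show ?thesis .
  qed
  have S: "S_BC n c cs \<theta> 0 \<le> -1"
    unfolding S_BC_def using key by (intro cSUP_least) (auto simp: c_def)
  have n0: "real n > 0" using assms by simp
  have dom: "dominates n c (t_BC n c cs) (t_VCG n c cs)"
    unfolding dominates_def
  proof (intro conjI)
    show "\<forall>\<theta>\<in>types n c. \<forall>i<n. t_VCG n c cs \<theta> i \<le> t_BC n c cs \<theta> i"
      using S_nonpos[of c n cs] n0 by (auto simp: t_BC_def c_def divide_nonpos_pos)
    have "\<theta> \<in> types n c" by (auto simp: types_def \<theta>_def c_def)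
    moreover have "t_VCG n c cs \<theta> 0 < t_BC n c cs \<theta> 0"
      using S n0 by (simp add: t_BC_def divide_neg_pos)
    ultimately show "\<exists>\<theta>\<in>types n c. \<exists>i<n. t_VCG n c cs \<theta> i < t_BC n c cs \<theta> i"
      using assms by force
  qed
  show ?thesis
    by (rule exI[of _ c], rule exI[of _ cs]) (use csum dom in \<open>auto simp: c_def cs_def\<close>)
qed

end
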